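(* Let $F$ and $p$ be positive integers. If $(d_1,d_2,\dots,d_p)$ is a $\mathrm{Sat}(F)$-sequence and $t_1,\dots,t_p$ are positive integers such that $t_1d_1+\cdots+t_pd_p<F$ and $\gcd\{d_i/d_{i+1},\,t_{i+1}\}=1$ for all $i\in\{1,\dots,p-1\}$, then $$\{d_1,\ t_1d_1+t_2d_2,\ \dots,\ t_1d_1+t_2d_2+\cdots+t_pd_p\}$$ is the minimal $\mathrm{Sat}(F)$-system of generators of an element of $\mathrm{Sat}(F)$ whose $\mathrm{Sat}(F)$-rank equals $p$. Moreover, every minimal $\mathrm{Sat}(F)$-system of generators of an element of $\mathrm{Sat}(F)$ with $\mathrm{Sat}(F)$-rank $p$ is of this form for some such $\mathrm{Sat}(F)$-sequence $(d_1,\dots,d_p)$ and positive integers $t_1,\dots,t_p$.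
   Context: A numerical semigroup is a subset $S\subseteq\mathbb{N}$ closed under addition, containing $0$, with $\mathbb{N}\setminus S$ finite; its Frobenius number $\mathrm{F}(S)$ is the largest integer not in $S$. For $A\subseteq\mathbb{N}$ and $a\in A$, let $\mathrm{d}_A(a)=\gcd\{x\in A\mid x\le a\}$. A numerical semigroup $S$ is saturated if $s+\mathrm{d}_S(s)\in S$ for all $s\in S\setminus\{0\}$. For a positive integer $F$, $\mathrm{Sat}(F)$ denotes the set of all saturated numerical semigroups $S$ with $\mathrm{F}(S)=F$. Let $\Delta(F+1)=\{0\}\cup\{x\in\mathbb{N}\mid x\ge F+1\}$. A set $X\subseteq\mathbb{N}$ is a $\mathrm{Sat}(F)$-set if $X\cap\Delta(F+1)=\emptyset$ and there exists $S\in\mathrm{Sat}(F)$ with $X\subseteq S$. For a $\mathrm{Sat}(F)$-set $X$, $\mathrm{Sat}(F)[X]$ denotes the intersection of all elements of $\mathrm{Sat}(F)$ containing $X$ (the smallest element of $\mathrm{Sat}(F)$ containing $X$). If $S=\mathrm{Sat}(F)[X]$, $X$ is a $\mathrm{Sat}(F)$-system of generators of $S$; it is minimal if $S\neq\mathrm{Sat}(F)[Y]$ for every proper subset $Y\subsetneq X$. Every $S\in\mathrm{Sat}(F)$ has a unique minimal $\mathrm{Sat}(F)$-system of generators, and its cardinality is the $\mathrm{Sat}(F)$-rank of $S$. For $k\ge1$, a $\mathrm{Sat}(F)$-sequence of length $k$ is a sequence of positive integers $(d_1,\dots,d_k)$ with $d_1>d_2>\cdots>d_k$, $d_{i+1}\mid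 d_i$ for all $i\in\{1,\dots,k-1\}$, and $d_k\nmid F$. *)

theory Defs
  imports Main
begin

definition numerical_semigroup :: "nat set \<Rightarrow> bool" where
  "numerical_semigroup S \<longleftrightarrow> 0 \<in> S \<and> (\<forall>x\<in>S. \<forall>y\<in>S. x + y \<in> S) \<and> finite (UNIV - S)"

definition frobenius :: "nat set \<Rightarrow> nat" where
  "frobenius S = Max (UNIV - S)"

definition dA :: "nat set \<Rightarrow> nat \<Rightarrow> nat" where
  "dA A a = Gcd {x \<in> A. x \<le> a}"

definition saturated :: "nat set \<Rightarrow> bool" where
  "saturated S \<longleftrightarrow> numerical_semigroup S \<and> (\<forall>s\<in>S - {0}. s + dA S s \<in> S)"

definition Sat :: "nat \<Rightarrow> nat set set" where
  "Sat F = {S. saturated S \<and> S \<noteq> UNIV \<and> frobenius S = F}"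

definition Delta :: "nat \<Rightarrow> nat set" where
  "Delta m = {0} \<union> {x. x \<ge> m}"

definition Sat_set :: "nat \<Rightarrow> nat set \<Rightarrow> bool" where
  "Sat_set F X \<longleftrightarrow> X \<inter> Delta (F + 1) = {} \<and> (\<exists>S\<in>Sat F. X \<subseteq> S)"

definition Sat_closure :: "nat \<Rightarrow> nat set \<Rightarrow> nat set" where
  "Sat_closure F X = \<Inter> {S \<in> Sat F. X \<subseteq> S}"

definition Sat_min_system :: "nat \<Rightarrow> nat set \<Rightarrow> nat set \<Rightarrow> bool" where
  "Sat_min_system F X S \<longleftrightarrow> Sat_set F X \<and> S = Sat_closure F X \<and>
     (\<forall>Y. Y \<subset> X \<longrightarrow> S \<noteq> Sat_closure F Y)"

definition Sat_rank :: "nat \<Rightarrow> nat set \<Rightarrow> nat" where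
  "Sat_rank F S = card (THE X. Sat_min_system F X S)"

definition Sat_sequence :: "nat \<Rightarrow> nat \<Rightarrow> (nat \<Rightarrow> nat) \<Rightarrow> bool" where
  "Sat_sequence F k d \<longleftrightarrow> k \<ge> 1 \<and> (\<forall>i\<in>{1..k}. d i > 0) \<and>
     (\<forall>i\<in>{1..<k}. d (Suc i) < d i \<and> d (Suc i) dvd d i) \<and> \<not> d k dvd F"

definition gen_set :: "nat \<Rightarrow> (nat \<Rightarrow> nat) \<Rightarrow> (nat \<Rightarrow> nat) \<Rightarrow> nat set" where
  "gen_set p d t = insert (d 1) ((\<lambda>k. \<Sum>j=1..k. t j * d j) ` {2..p})"

end

theory Submission
  imports Defs
begin

definition CC :: "nat \<Rightarrow> nat set \<Rightarrow> nat set" where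
 "CC F X = {s. s = 0 \<or> F < s \<or> ((\<exists>x\<in>X. x \<le> s) \<and> Gcd {x\<in>X. x \<le> s} dvd s)}"

lemma Gcd_sub_dvd: "(A::nat set) \<subseteq> B \<Longrightarrow> Gcd B dvd Gcd A"
  by (rule Gcd_greatest) (auto intro: Gcd_dvd)

lemma g_mono: "(s::nat) \<le> s' \<Longrightarrow> Gcd {x\<in>X. x \<le> s'} dvd Gcd {x\<in>X. x \<le> s}"
  by (rule Gcd_sub_dvd) auto

lemma X_sub_CC: "X \<subseteq> CC F X"
  unfolding CC_def by (auto intro: Gcd_dvd)

lemma CC_below: "c \<in> CC F X \<Longrightarrow> c \<le> s \<Longrightarrow> s \<le> F \<Longrightarrow> Gcd {x\<in>X. x \<le> s} dvd c"
  unfolding CC_def by (auto intro: dvd_trans[OF g_mono])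

lemma dA_CC: assumes "s \<in> CC F X" "s \<le> F"
  shows "dA (CC F X) s = Gcd {x\<in>X. x \<le> s}"
proof (rule dvd_antisym)
  show "dA (CC F X) s dvd Gcd {x\<in>X. x \<le> s}" unfolding dA_def
    by (rule Gcd_sub_dvd) (use X_sub_CC in auto)
  show "Gcd {x\<in>X. x \<le> s} dvd dA (CC F X) s" unfolding dA_def
    by (rule Gcd_greatest) (use CC_below assms in auto)
qed

lemma CC_Sat: assumes "F \<notin> CC F X" shows "CC F X \<in> Sat F"
proof -
  let ?C = "CC F X"
  have fin: "finite (UNIV - ?C)"
    by (rule finite_subset[of _ "{..F}"]) (auto simp: CC_def)
  have ns: "numerical_semigroup ?C"
    unfolding numerical_semigroup_def
  proof (intro conjI ballI fin)
    show "0 \<in> ?C" by (simp add: CC_def)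
    fix a b assume a: "a \<in> ?C" and b: "b \<in> ?C"
    show "a + b \<in> ?C"
    proof (cases "a = 0 \<or> b = 0 \<or> F < a \<or> F < b")
      case True then show ?thesis using a b by (auto simp: CC_def)
    next
      case False
      then obtain xa where xa: "xa \<in> X" "xa \<le> a" and ga: "Gcd {x\<in>X. x \<le> a} dvd a"
        using a by (auto simp: CC_def)
      from False have gb: "Gcd {x\<in>X. x \<le> b} dvd b" using b by (auto simp: CC_def)
      have "Gcd {x\<in>X. x \<le> a + b} dvd a" using g_mono[of a "a+b" X] ga dvd_trans by auto
      moreover have "Gcd {x\<in>X. x \<le> a + b} dvd b" using g_mono[of b "a+b" X] gb dvd_trans by auto
      moreover have "xa \<le> a + b" using xa by simp
      ultimately show ?thesis using xa(1) unfolding CC_def by (auto intro: dvd_add)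
    qed
  qed
  have sat: "saturated ?C"
    unfolding saturated_def
  proof (intro conjI ns ballI)
    fix s assume s: "s \<in> ?C - {0}"
    show "s + dA ?C s \<in> ?C"
    proof (cases "F < s")
      case True then show ?thesis by (auto simp: CC_def)
    next
      case False
      then have sF: "s \<le> F" by simp
      have d: "dA ?C s = Gcd {x\<in>X. x \<le> s}" using dA_CC[OF _ sF] s by auto
      from s False obtain x where x: "x \<in> X" "x \<le> s" and gs: "Gcd {x\<in>X. x \<le> s} dvd s"
        by (auto simp: CC_def)
      have "Gcd {x\<in>X. x \<le> s + dA ?C s} dvd Gcd {x\<in>X. x \<le> s}" by (rule g_mono) simp
      then have "Gcd {x\<in>X. x \<le> s + dA ?C s} dvd s + dA ?C s"
        using gs d by (metis dvd_add dvd_trans)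
      moreover have "x \<le> s + dA ?C s" using x by simp
      ultimately show ?thesis using x(1) unfolding CC_def by blast
    qed
  qed
  have ne: "?C \<noteq> UNIV" using assms by auto
  have "frobenius ?C = F" unfolding frobenius_def
  proof (rule Max_eqI[OF fin])
    show "F \<in> UNIV - ?C" using assms by simp
    fix y assume "y \<in> UNIV - ?C" then show "y \<le> F" by (auto simp: CC_def)
  qed
  then show ?thesis using sat ne by (simp add: Sat_def)
qed

lemma sat_step:
  assumes "saturated T" "y \<in> T" "0 < y" "y \<le> m" "dA T y dvd (m - y)"
  shows "m \<in> T"
  using assms(2-)
proof (induction "m - y" arbitrary: y rule: less_induct)
  case less
  show ?case
  proof (cases "m = y")
    case True then show ?thesis using less by simp
  next
    case False
    let ?D = "dA T y"
    have "?D dvd y" unfolding dA_def using less(2) by (auto intro: Gcd_dvd)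
    then have D0: "?D > 0" using less(3) by (cases "?D = 0") auto
    have y': "y + ?D \<in> T" using assms(1) less(2,3) unfolding saturated_def by auto
    have "?D \<le> m - y" using less(5) False less(4) by (simp add: dvd_imp_le)
    have dd: "dA T (y + ?D) dvd ?D" unfolding dA_def by (rule Gcd_sub_dvd) auto
    have "?D dvd m - (y + ?D)" using less(5) `?D \<le> m - y`
      by (metis diff_diff_left dvd_diff_nat dvd_refl)
    then have "dA T (y + ?D) dvd m - (y + ?D)" using dd dvd_trans by blast
    then show ?thesis
      using less(1)[of "y + ?D"] y' D0 `?D \<le> m - y` less(4) by auto
  qed
qed

lemma CC_sub:
  assumes T: "T \<in> Sat F" and XT: "X \<subseteq> T" and X0: "0 \<notin> X"
  shows "CC F X \<subseteq> T"
proof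
  fix s assume s: "s \<in> CC F X"
  have satT: "saturated T" and fr: "frobenius T = F" and ne: "T \<noteq> UNIV" using T by (auto simp: Sat_def)
  have finT: "finite (UNIV - T)" using satT by (simp add: saturated_def numerical_semigroup_def)
  have 0: "0 \<in> T" using satT by (simp add: saturated_def numerical_semigroup_def)
  show "s \<in> T"
  proof (cases "s = 0 \<or> F < s")
    case True
    moreover have "F < s \<Longrightarrow> s \<in> T"
    proof (rule ccontr)
      assume "F < s" "s \<notin> T"
      then have "s \<le> Max (UNIV - T)" using finT by auto
      then show False using fr `F < s` by (simp add: frobenius_def)
    qed
    ultimately show ?thesis using 0 by auto
  next
    case False
    then obtain x where x: "x \<in> X" "x \<le> s" and gs: "Gcd {x\<in>X. x \<le> s} dvd s"
      using s by (auto simp: CC_def)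
    define y where "y = Max {x\<in>X. x \<le> s}"
    have fs: "finite {x\<in>X. x \<le> s}" by simp
    have "y \<in> {x\<in>X. x \<le> s}" unfolding y_def by (rule Max_in[OF fs]) (use x in auto)
    then have y: "y \<in> X" "y \<le> s" by auto
    have eq: "{x\<in>X. x \<le> y} = {x\<in>X. x \<le> s}" using Max_ge[OF fs] y unfolding y_def by fastforce
    have "dA T y dvd Gcd {x\<in>X. x \<le> y}" unfolding dA_def by (rule Gcd_sub_dvd) (use XT in auto)
    moreover have "Gcd {x\<in>X. x \<le> s} dvd s - y"
      using gs y by (auto intro: dvd_diff_nat Gcd_dvd)
    ultimately have "dA T y dvd s - y" using eq dvd_trans by auto
    moreover have "0 < y" using y X0 by (cases y) auto
    ultimately show ?thesis using sat_step[OF satT] y XT by auto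
  qed
qed


lemma F_notin: "T \<in> Sat F \<Longrightarrow> F \<notin> T"
proof -
  assume T: "T \<in> Sat F"
  then have fin: "finite (UNIV - T)" and ne: "T \<noteq> UNIV" and fr: "Max (UNIV - T) = F"
    by (auto simp: Sat_def saturated_def numerical_semigroup_def frobenius_def)
  have "UNIV - T \<noteq> {}" using ne by auto
  from Max_in[OF fin this] fr show ?thesis by auto
qed

lemma Sat_set_elem: "Sat_set F X \<Longrightarrow> x \<in> X \<Longrightarrow> 0 < x \<and> x < F"
proof -
  assume "Sat_set F X" "x \<in> X"
  then obtain T where T: "T \<in> Sat F" "X \<subseteq> T" and D: "x \<notin> Delta (F+1)"
    unfolding Sat_set_def by auto
  have "x \<noteq> F" using F_notin[OF T(1)] T(2) `x \<in> X` by auto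
  then show ?thesis using D by (auto simp: Delta_def)
qed

lemma Sat_set_sub: "Sat_set F X \<Longrightarrow> Y \<subseteq> X \<Longrightarrow> Sat_set F Y"
  unfolding Sat_set_def by blast

lemma closure_eq: assumes "Sat_set F X"
  shows "Sat_closure F X = CC F X" "F \<notin> CC F X" "CC F X \<in> Sat F"
proof -
  obtain T where T: "T \<in> Sat F" "X \<subseteq> T" using assms unfolding Sat_set_def by auto
  have X0: "0 \<notin> X" using Sat_set_elem[OF assms] by blast
  have "CC F X \<subseteq> T" by (rule CC_sub[OF T X0])
  then show F: "F \<notin> CC F X" using F_notin[OF T(1)] by auto
  show CS: "CC F X \<in> Sat F" by (rule CC_Sat[OF F])
  show "Sat_closure F X = CC F X" unfolding Sat_closure_def
  proof (rule antisym)
    show "\<Inter> {S \<in> Sat F. X \<subseteq> S} \<subseteq> CC F X" by (rule Inter_lower) (use CS X_sub_CC in auto)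
    show "CC F X \<subseteq> \<Inter> {S \<in> Sat F. X \<subseteq> S}" by (rule Inter_greatest) (use CC_sub X0 in auto)
  qed
qed

definition indep :: "nat set \<Rightarrow> bool" where
  "indep X \<longleftrightarrow> (\<forall>x\<in>X. \<not> Gcd {y\<in>X. y < x} dvd x)"

definition KK :: "nat \<Rightarrow> nat set \<Rightarrow> nat set" where
  "KK F S = {s\<in>S. 0 < s \<and> s < F \<and> \<not> Gcd {c\<in>S. c < s} dvd s}"

lemma h_CC: assumes "s \<le> F" shows "Gcd {c\<in>CC F X. c < s} = Gcd {x\<in>X. x < s}"
proof (rule dvd_antisym)
  show "Gcd {c\<in>CC F X. c < s} dvd Gcd {x\<in>X. x < s}"
    by (rule Gcd_sub_dvd) (use X_sub_CC in auto)
  show "Gcd {x\<in>X. x < s} dvd Gcd {c\<in>CC F X. c < s}"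
  proof (rule Gcd_greatest)
    fix c assume c: "c \<in> {c\<in>CC F X. c < s}"
    show "Gcd {x\<in>X. x < s} dvd c"
    proof (cases "c = 0")
      case False
      with c assms have g: "Gcd {x\<in>X. x \<le> c} dvd c" by (auto simp: CC_def)
      have "Gcd {x\<in>X. x < s} dvd Gcd {x\<in>X. x \<le> c}" by (rule Gcd_sub_dvd) (use c in auto)
      then show ?thesis using g dvd_trans by blast
    qed simp
  qed
qed

lemma KK_CC: assumes X: "\<And>x. x \<in> X \<Longrightarrow> 0 < x \<and> x < F" and ind: "indep X"
  shows "KK F (CC F X) = X"
proof (rule set_eqI, rule iffI)
  fix s assume s: "s \<in> KK F (CC F X)"
  then have sC: "s \<in> CC F X" and s0: "0 < s" and sF: "s < F"
    and nd: "\<not> Gcd {x\<in>X. x < s} dvd s" using h_CC[of s F X] by (auto simp: KK_def)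
  from sC s0 sF have g: "Gcd {x\<in>X. x \<le> s} dvd s" by (auto simp: CC_def)
  show "s \<in> X"
  proof (rule ccontr)
    assume "s \<notin> X"
    have "{x\<in>X. x \<le> s} = {x\<in>X. x < s}"
    proof (rule set_eqI)
      fix y show "y \<in> {x\<in>X. x \<le> s} \<longleftrightarrow> y \<in> {x\<in>X. x < s}"
        using \<open>s \<notin> X\<close> by (cases "y = s") auto
    qed
    then show False using g nd by simp
  qed
next
  fix s assume s: "s \<in> X"
  have sC: "s \<in> CC F X" using s X_sub_CC by blast
  have b: "0 < s" "s < F" using X[OF s] by auto
  have "Gcd {c\<in>CC F X. c < s} = Gcd {x\<in>X. x < s}" using h_CC[of s F X] b by simp
  moreover have "\<not> Gcd {x\<in>X. x < s} dvd s" using ind s unfolding indep_def by blast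
  ultimately show "s \<in> KK F (CC F X)" using sC b unfolding KK_def by simp
qed

lemma remove_CC: assumes x: "x \<in> X" and h: "Gcd {y\<in>X. y < x} dvd x" and X0: "0 \<notin> X"
  shows "CC F (X - {x}) = CC F X"
proof -
  have x0: "x \<noteq> 0" using x X0 by metis
  have "{y\<in>X. y < x} \<noteq> {}"
  proof
    assume "{y\<in>X. y < x} = {}"
    then have "Gcd {y\<in>X. y < x} = Gcd {}" by (simp only:)
    then have "Gcd {y\<in>X. y < x} = 0" by (simp only: Gcd_empty)
    then show False using h x0 dvd_0_left by metis
  qed
  then obtain z where z: "z \<in> X" "z < x" by auto
  have key: "((\<exists>y\<in>X-{x}. y \<le> s) \<and> Gcd {y\<in>X-{x}. y \<le> s} dvd s) \<longleftrightarrow>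
             ((\<exists>y\<in>X. y \<le> s) \<and> Gcd {y\<in>X. y \<le> s} dvd s)" for s
  proof (cases "s < x")
    case True
    then have "{y\<in>X-{x}. y \<le> s} = {y\<in>X. y \<le> s}" by auto
    moreover have "(\<exists>y\<in>X-{x}. y \<le> s) \<longleftrightarrow> (\<exists>y\<in>X. y \<le> s)" using True by auto
    ultimately show ?thesis by simp
  next
    case False
    let ?A = "{y\<in>X-{x}. y \<le> s}"
    have e: "{y\<in>X. y \<le> s} = insert x ?A" using False x by auto
    have "Gcd ?A dvd Gcd {y\<in>X. y < x}" by (rule Gcd_sub_dvd) (use False in auto)
    then have "Gcd ?A dvd x" using h dvd_trans by blast
    then have "Gcd {y\<in>X. y \<le> s} = Gcd ?A" unfolding e Gcd_insert
      by (simp add: gcd_proj2_if_dvd_nat)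
    moreover have "\<exists>y\<in>X-{x}. y \<le> s" using z False by (intro bexI[of _ z]) auto
    ultimately show ?thesis using x False by auto
  qed
  show ?thesis unfolding CC_def by (simp only: key)
qed

lemma indep_sub: "indep X \<Longrightarrow> Y \<subseteq> X \<Longrightarrow> indep Y"
  unfolding indep_def
proof (intro ballI)
  fix y assume a: "\<forall>x\<in>X. \<not> Gcd {y \<in> X. y < x} dvd x" "Y \<subseteq> X" "y \<in> Y"
  have d1: "Gcd {x\<in>X. x < y} dvd Gcd {x\<in>Y. x < y}" by (rule Gcd_sub_dvd) (use a(2) in blast)
  have yX: "y \<in> X" using a(2,3) by (rule subsetD)
  have n: "\<not> Gcd {x\<in>X. x < y} dvd y" by (rule bspec[OF a(1) yX])
  show "\<not> Gcd {x\<in>Y. x < y} dvd y"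
  proof
    assume "Gcd {x\<in>Y. x < y} dvd y"
    with d1 have "Gcd {x\<in>X. x < y} dvd y" by (rule dvd_trans)
    with n show False by contradiction
  qed
qed

lemma min_iff: "Sat_min_system F X S \<longleftrightarrow> Sat_set F X \<and> S = CC F X \<and> indep X"
proof
  assume m: "Sat_min_system F X S"
  then have m': "Sat_set F X \<and> S = Sat_closure F X \<and> (\<forall>Y. Y \<subset> X \<longrightarrow> S \<noteq> Sat_closure F Y)"
    unfolding Sat_min_system_def .
  have ss: "Sat_set F X" using m' by (rule conjunct1)
  have S0: "S = Sat_closure F X" using m' by (simp only:)
  have mm: "\<forall>Y. Y \<subset> X \<longrightarrow> S \<noteq> Sat_closure F Y" using m' by (rule conjunct2[OF conjunct2])
  have S: "S = CC F X" using S0 closure_eq(1)[OF ss] by simp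
  have X0: "0 \<notin> X" using Sat_set_elem[OF ss] by (metis less_irrefl)
  have "indep X" unfolding indep_def
  proof (intro ballI notI)
    fix x assume x: "x \<in> X" "Gcd {y\<in>X. y < x} dvd x"
    have "Sat_set F (X - {x})" by (rule Sat_set_sub[OF ss]) (rule Diff_subset)
    then have "Sat_closure F (X - {x}) = S" using closure_eq(1) remove_CC[OF x X0] S by simp
    moreover have ps: "X - {x} \<subset> X" using x(1) by blast
    moreover have "S \<noteq> Sat_closure F (X - {x})" using mp[OF spec[OF mm, of "X - {x}"] ps] .
    ultimately show False by (metis (full_types))
  qed
  then show "Sat_set F X \<and> S = CC F X \<and> indep X" using ss S by simp
next
  assume a: "Sat_set F X \<and> S = CC F X \<and> indep X"
  have ssX': "Sat_set F X" and SX': "S = CC F X" using a by auto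
  have "S \<noteq> Sat_closure F Y" if Y: "Y \<subset> X" for Y
  proof
    assume e: "S = Sat_closure F Y"
    have ssX: "Sat_set F X" and SX: "S = CC F X" and iX: "indep X" using a by auto
    have YX: "Y \<subseteq> X" using Y by (rule psubset_imp_subset)
    have sY: "Sat_set F Y" by (rule Sat_set_sub[OF ssX YX])
    have iY: "indep Y" by (rule indep_sub[OF iX YX])
    have "KK F (CC F Y) = Y" by (rule KK_CC[OF Sat_set_elem[OF sY] iY])
    moreover have "KK F (CC F X) = X" by (rule KK_CC[OF Sat_set_elem[OF ssX] iX])
    moreover have "CC F Y = CC F X" using e SX closure_eq(1)[OF sY] by (metis)
    ultimately have "Y = X" by metis
    then show False using Y by blast
  qed
  moreover have "S = Sat_closure F X" using closure_eq(1)[OF ssX'] SX' by metis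
  ultimately show "Sat_min_system F X S" using a unfolding Sat_min_system_def by simp
qed

lemma rank_eq: assumes "Sat_min_system F X S" shows "Sat_rank F S = card X"
proof -
  have "(THE X. Sat_min_system F X S) = X"
  proof (rule the_equality)
    show "Sat_min_system F X S" by (rule assms)
    fix Y assume "Sat_min_system F Y S"
    then have y: "Sat_set F Y" "S = CC F Y" "indep Y" unfolding min_iff by auto
    have x: "Sat_set F X" "S = CC F X" "indep X" using assms unfolding min_iff by auto
    have "KK F S = Y" using KK_CC[OF Sat_set_elem[OF y(1)] y(3)] y(2) by simp
    moreover have "KK F S = X" using KK_CC[OF Sat_set_elem[OF x(1)] x(3)] x(2) by simp
    ultimately show "Y = X" by simp
  qed
  then show ?thesis by (simp add: Sat_rank_def)
qed


lemma gcd_core: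
  fixes e D s t :: nat
  assumes "0 < e" "e dvd D" "D dvd s"
  shows "gcd (s + t*e) D = e * gcd (D div e) t"
proof -
  obtain q where q: "D = e * q" using assms(2) by blast
  obtain m where m: "s = D * m" using assms(3) by blast
  have "gcd (s + t*e) D = gcd (t*e) D" unfolding m
    by (metis add.commute gcd.commute gcd_add_mult mult.commute)
  also have "\<dots> = e * gcd t q" unfolding q by (simp add: gcd_mult_distrib_nat mult.commute)
  finally show ?thesis using q assms(1) by (simp add: gcd.commute)
qed

definition inc :: "nat \<Rightarrow> (nat \<Rightarrow> nat) \<Rightarrow> bool" where
  "inc p a \<longleftrightarrow> (\<forall>j k. 1 \<le> j \<longrightarrow> j < k \<longrightarrow> k \<le> p \<longrightarrow> a j < a k)"

lemma inc_from_Suc: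
  assumes "\<And>k. 1 \<le> k \<Longrightarrow> Suc k \<le> p \<Longrightarrow> a k < a (Suc k)"
  shows "inc p a"
  unfolding inc_def
proof (intro allI impI)
  fix j k assume j: "1 \<le> j" and jk: "j < k" and kp: "k \<le> p"
  from jk kp show "a j < a k"
  proof (induction k rule: less_induct)
    case (less k)
    then obtain k' where k: "k = Suc k'" by (cases k) auto
    show ?case
    proof (cases "j = k'")
      case True then show ?thesis using assms[of k'] j k less by auto
    next
      case False
      then have "a j < a k'" using less k by auto
      also have "a k' < a k" using assms[of k'] j k less False by auto
      finally show ?thesis .
    qed
  qed
qed

lemma inc_le_set: assumes "inc p a" "1 \<le> k" "k \<le> p"
  shows "{y \<in> a`{1..p}. y \<le> a k} = a`{1..k}"
proof (rule set_eqI, rule iffI)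
  fix y assume "y \<in> {y \<in> a`{1..p}. y \<le> a k}"
  then obtain j where j: "j \<in> {1..p}" "y = a j" "a j \<le> a k" by auto
  have "j \<le> k"
  proof (rule ccontr)
    assume "\<not> j \<le> k" then have "a k < a j" using assms j unfolding inc_def by auto
    then show False using j by simp
  qed
  then show "y \<in> a`{1..k}" using j by auto
next
  fix y assume "y \<in> a`{1..k}"
  then obtain j where j: "j \<in> {1..k}" "y = a j" by auto
  have "a j \<le> a k" using assms j unfolding inc_def by (cases "j = k") (auto simp: less_imp_le)
  then show "y \<in> {y \<in> a`{1..p}. y \<le> a k}" using j assms by auto
qed

lemma inc_lt_set: assumes "inc p a" "1 \<le> k" "k \<le> p"
  shows "{y \<in> a`{1..p}. y < a k} = a`{1..<k}"
proof (rule set_eqI, rule iffI)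
  fix y assume "y \<in> {y \<in> a`{1..p}. y < a k}"
  then obtain j where j: "j \<in> {1..p}" "y = a j" "a j < a k" by auto
  have "j < k"
  proof (rule ccontr)
    assume "\<not> j < k" then have "a k \<le> a j" using assms j unfolding inc_def
      by (cases "j = k") (auto simp: less_imp_le)
    then show False using j by simp
  qed
  then show "y \<in> a`{1..<k}" using j by auto
next
  fix y assume "y \<in> a`{1..<k}"
  then obtain j where j: "j \<in> {1..<k}" "y = a j" by auto
  have "a j < a k" using assms j unfolding inc_def by auto
  then show "y \<in> {y \<in> a`{1..p}. y < a k}" using j assms by auto
qed

lemma Gcd_img_Suc: "Gcd ((a::nat\<Rightarrow>nat)`{1..Suc k}) = gcd (a (Suc k)) (Gcd (a`{1..k}))"
proof -
  have "{1..Suc k} = insert (Suc k) {1..k}" by auto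
  then show ?thesis by (simp add: Gcd_insert)
qed

lemma inc_card: assumes "inc p a" shows "card (a`{1..p}) = p"
proof -
  have "inj_on a {1..p}" unfolding inj_on_def
  proof (intro ballI impI)
    fix i j assume "i \<in> {1..p}" "j \<in> {1..p}" "a i = a j"
    then show "i = j" using assms unfolding inc_def
      by (metis atLeastAtMost_iff less_irrefl nat_neq_iff)
  qed
  then show ?thesis by (simp add: card_image)
qed

lemma inc_indep:
  assumes "inc p a" "0 < a 1"
    "\<And>k. 1 \<le> k \<Longrightarrow> Suc k \<le> p \<Longrightarrow> \<not> Gcd (a`{1..k}) dvd a (Suc k)"
  shows "indep (a`{1..p})"
  unfolding indep_def
proof
  fix x assume "x \<in> a`{1..p}"
  then obtain k where k: "k \<in> {1..p}" "x = a k" by auto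
  have e: "{y \<in> a`{1..p}. y < x} = a`{1..<k}" using inc_lt_set[OF assms(1)] k by auto
  show "\<not> Gcd {y \<in> a`{1..p}. y < x} dvd x"
  proof (cases "k = 1")
    case True
    then have "{y \<in> a`{1..p}. y < x} = {}" using e by simp
    then have "Gcd {y \<in> a`{1..p}. y < x} = 0" by (simp only: Gcd_empty)
    then show ?thesis using k assms(2) True by (metis dvd_0_left_iff less_irrefl)
  next
    case False
    then obtain k' where k': "k = Suc k'" "1 \<le> k'" using k by (cases k) auto
    have "{1..<k} = {1..k'}" using k' by auto
    then show ?thesis using e k k' assms(3)[of k'] by auto
  qed
qed


lemma part1:
  assumes F0: "F > 0" and p0: "p > 0" and seq: "Sat_sequence F p d"
    and tpos: "\<forall>i\<in>{1..p}. t i > 0" and sumF: "(\<Sum>i=1..p. t i * d i) < F"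
    and gc: "\<forall>i\<in>{1..<p}. gcd (d i div d (Suc i)) (t (Suc i)) = 1"
  shows "\<exists>S\<in>Sat F. Sat_min_system F (gen_set p d t) S \<and> Sat_rank F S = p"
proof -
  define Sm where "Sm k = (\<Sum>j=1..k. t j * d j)" for k
  define a where "a k = (if k = 1 then d 1 else Sm k)" for k
  have dpos: "\<And>i. 1 \<le> i \<Longrightarrow> i \<le> p \<Longrightarrow> d i > 0" using seq unfolding Sat_sequence_def by auto
  have dstep: "\<And>i. 1 \<le> i \<Longrightarrow> Suc i \<le> p \<Longrightarrow> d (Suc i) < d i \<and> d (Suc i) dvd d i"
    using seq unfolding Sat_sequence_def by auto
  have ndF: "\<not> d p dvd F" using seq unfolding Sat_sequence_def by auto
  have ddvd: "d k dvd d j" if "1 \<le> j" "j \<le> k" "k \<le> p" for j k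
    using that(2,3)
  proof (induction k rule: dec_induct)
    case base then show ?case by simp
  next
    case (step n)
    then have "d (Suc n) dvd d n" using dstep[of n] that(1) by auto
    then show ?case using step by (auto intro: dvd_trans)
  qed
  have dSm: "d k dvd Sm k" if "1 \<le> k" "k \<le> p" for k
    unfolding Sm_def
  proof (rule dvd_sum)
    fix j assume "j \<in> {1..k}"
    then have "d k dvd d j" using ddvd that by auto
    then show "d k dvd t j * d j" by simp
  qed
  have Sm_Suc: "Sm (Suc k) = Sm k + t (Suc k) * d (Suc k)" for k
    unfolding Sm_def by (simp add: sum.cl_ivl_Suc)
  have aSuc: "a (Suc k) = Sm k + t (Suc k) * d (Suc k)" if "1 \<le> k" for k
    using that Sm_Suc unfolding a_def by auto
  have a_le: "a k \<le> Sm k" if "1 \<le> k" "k \<le> p" for k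
  proof (cases "k = 1")
    case True
    have "t 1 > 0" using tpos p0 by auto
    then have "d 1 \<le> t 1 * d 1" by simp
    then show ?thesis using True unfolding a_def Sm_def by simp
  qed (simp add: a_def)
  have inc: "inc p a"
  proof (rule inc_from_Suc)
    fix k assume k: "1 \<le> k" "Suc k \<le> p"
    have "t (Suc k) > 0" "d (Suc k) > 0" using tpos dpos[of "Suc k"] k by auto
    then have "Sm k < a (Suc k)" using aSuc[OF k(1)] by simp
    then show "a k < a (Suc k)" using a_le[of k] k by simp
  qed
  have a1: "a 1 = d 1" "0 < a 1" using dpos[of 1] p0 by (auto simp: a_def)
  have Sm_mono: "Sm k \<le> Sm p" if "k \<le> p" for k
    unfolding Sm_def by (rule sum_mono2) (use that in auto)
  have aF: "0 < a k \<and> a k < F" if "1 \<le> k" "k \<le> p" for k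
  proof
    show "a k < F" using a_le[OF that] Sm_mono[OF that(2)] sumF unfolding Sm_def by simp
    show "0 < a k"
    proof (cases "k = 1")
      case False
      then have "a 1 < a k" using inc that unfolding inc_def by auto
      then show ?thesis by simp
    qed (use a1 in simp)
  qed
  have gcdk: "Gcd (a`{1..k}) = d k" if "1 \<le> k" "k \<le> p" for k
    using that
  proof (induction k rule: dec_induct)
    case base then show ?case using a1 by simp
  next
    case (step n)
    have n: "1 \<le> n" "Suc n \<le> p" using step by auto
    have "Gcd (a`{1..Suc n}) = gcd (a (Suc n)) (d n)" using Gcd_img_Suc step by simp
    also have "\<dots> = d (Suc n) * gcd (d n div d (Suc n)) (t (Suc n))"
      unfolding aSuc[OF n(1)] by (rule gcd_core) (use dpos[of "Suc n"] dstep[OF n] dSm[of n] n in auto)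
    also have "\<dots> = d (Suc n)" using gc n by auto
    finally show ?case .
  qed
  have nd: "\<not> Gcd (a`{1..k}) dvd a (Suc k)" if "1 \<le> k" "Suc k \<le> p" for k
  proof
    assume h: "Gcd (a`{1..k}) dvd a (Suc k)"
    have "d (Suc k) = Gcd (a`{1..Suc k})" using gcdk[of "Suc k"] that by simp
    also have "\<dots> = gcd (a (Suc k)) (d k)" using Gcd_img_Suc gcdk that by simp
    also have "\<dots> = d k" using h gcdk that by simp
    finally show False using dstep[of k] that by simp
  qed
  let ?G = "a`{1..p}"
  have ind: "indep ?G" by (rule inc_indep[OF inc a1(2) nd])
  have Gdef: "gen_set p d t = ?G"
  proof -
    have "{1..p} = insert 1 {2..p}" using p0 by auto
    then have "?G = insert (a 1) (a`{2..p})" by simp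
    also have "a`{2..p} = (\<lambda>k. \<Sum>j=1..k. t j * d j) ` {2..p}"
      by (rule image_cong) (auto simp: a_def Sm_def)
    finally show ?thesis unfolding gen_set_def using a1 by simp
  qed
  have Gel: "\<And>x. x \<in> ?G \<Longrightarrow> 0 < x \<and> x < F" using aF by auto
  have GF: "{x\<in>?G. x \<le> F} = ?G"
  proof (rule set_eqI)
    fix x show "x \<in> {x\<in>?G. x \<le> F} \<longleftrightarrow> x \<in> ?G" using Gel[of x] by auto
  qed
  have "Gcd ?G = d p" using gcdk[of p] p0 by simp
  then have "\<not> Gcd {x\<in>?G. x \<le> F} dvd F" using ndF GF by simp
  then have FC: "F \<notin> CC F ?G" unfolding CC_def using F0 by simp
  have CS: "CC F ?G \<in> Sat F" by (rule CC_Sat[OF FC])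
  have ssG: "Sat_set F ?G" unfolding Sat_set_def
  proof
    show "?G \<inter> Delta (F + 1) = {}"
    proof (rule equals0I)
      fix x assume "x \<in> ?G \<inter> Delta (F + 1)"
      then show False using Gel[of x] unfolding Delta_def by auto
    qed
    show "\<exists>S\<in>Sat F. ?G \<subseteq> S" using CS X_sub_CC[of ?G F] by (rule bexI[rotated])
  qed
  have ms: "Sat_min_system F ?G (CC F ?G)" unfolding min_iff using ssG ind by simp
  have "Sat_rank F (CC F ?G) = p" using rank_eq[OF ms] inc_card[OF inc] by simp
  then show ?thesis using CS ms unfolding Gdef by (intro bexI[of _ "CC F ?G"]) simp_all
qed


lemma part2:
  assumes F0: "F > 0" and p0: "p > 0" and SS: "S \<in> Sat F"
    and ms: "Sat_min_system F X S" and rk: "Sat_rank F S = p"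
  shows "\<exists>d t. Sat_sequence F p d \<and> (\<forall>i\<in>{1..p}. t i > 0) \<and>
            (\<Sum>i=1..p. t i * d i) < F \<and>
            (\<forall>i\<in>{1..<p}. gcd (d i div d (Suc i)) (t (Suc i)) = 1) \<and>
            X = gen_set p d t"
proof -
  have ss: "Sat_set F X" and SX: "S = CC F X" and ind: "indep X" using ms unfolding min_iff by auto
  have cX: "card X = p" using rank_eq[OF ms] rk by simp
  have Xel: "\<And>x. x \<in> X \<Longrightarrow> 0 < x \<and> x < F" using Sat_set_elem[OF ss] by blast
  have finX: "finite X" by (rule finite_subset[of _ "{..<F}"]) (use Xel in auto)
  define xs where "xs = sorted_list_of_set X"
  define a where "a k = xs ! (k - 1)" for k
  have len: "length xs = p" using cX finX unfolding xs_def by simp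
  have setxs: "set xs = X" using finX unfolding xs_def by simp
  have srt: "sorted_wrt (<) xs" unfolding xs_def by (rule strict_sorted_list_of_set)
  have inc: "inc p a" unfolding inc_def
  proof (intro allI impI)
    fix j k assume "1 \<le> j" "j < k" "k \<le> p"
    then show "a j < a k" unfolding a_def using sorted_wrt_nth_less[OF srt, of "j - 1" "k - 1"] len by simp
  qed
  have aX: "a`{1..p} = X"
  proof (rule set_eqI, rule iffI)
    fix x assume "x \<in> a`{1..p}"
    then obtain k where "k \<in> {1..p}" "x = a k" by auto
    then show "x \<in> X" unfolding a_def using nth_mem[of "k - 1" xs] len setxs by auto
  next
    fix x assume "x \<in> X"
    then obtain i where i: "i < p" "xs ! i = x" using setxs len by (metis in_set_conv_nth)
    then have "a (Suc i) = x" unfolding a_def by simp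
    then show "x \<in> a`{1..p}" using i by force
  qed
  have ain: "a k \<in> X" if "1 \<le> k" "k \<le> p" for k using aX that by auto
  define D where "D k = Gcd (a`{1..k})" for k
  define t where "t k = (if k = 1 then 1 else (a k - a (k - 1)) div D k)" for k
  have a1: "0 < a 1" using Xel ain[of 1] p0 by auto
  have D1: "D 1 = a 1" unfolding D_def by simp
  have Ddvd_a: "D k dvd a j" if "1 \<le> j" "j \<le> k" for j k
    unfolding D_def by (rule Gcd_dvd) (use that in auto)
  have Dpos: "D k > 0" if "1 \<le> k" for k
  proof -
    have "D k dvd a 1" using Ddvd_a that by simp
    then show ?thesis using a1 by (cases "D k = 0") auto
  qed
  have DSuc: "D (Suc k) = gcd (a (Suc k)) (D k)" for k unfolding D_def by (rule Gcd_img_Suc)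
  have DSdvd: "D (Suc k) dvd D k" for k using DSuc by simp
  have nd: "\<not> D k dvd a (Suc k)" if "1 \<le> k" "Suc k \<le> p" for k
  proof -
    have "{y\<in>X. y < a (Suc k)} = a`{1..<Suc k}" using inc_lt_set[OF inc, of "Suc k"] that aX by simp
    also have "{1..<Suc k} = {1..k}" by auto
    finally have "Gcd {y\<in>X. y < a (Suc k)} = D k" unfolding D_def by simp
    then show ?thesis using ind ain[of "Suc k"] that unfolding indep_def by auto
  qed
  have Dlt: "D (Suc k) < D k" if "1 \<le> k" "Suc k \<le> p" for k
  proof -
    have "D (Suc k) \<le> D k" using DSdvd[of k] Dpos[OF that(1)] by (simp add: dvd_imp_le)
    moreover have "D (Suc k) \<noteq> D k"
    proof
      assume "D (Suc k) = D k"
      then have "gcd (a (Suc k)) (D k) = D k" using DSuc by simp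
      then have "D k dvd a (Suc k)" by (metis gcd_dvd1)
      then show False using nd that by simp
    qed
    ultimately show ?thesis by simp
  qed
  have GX: "Gcd X = D p" unfolding D_def aX[symmetric] ..
  have ndF: "\<not> D p dvd F"
  proof
    assume h: "D p dvd F"
    have "{x\<in>X. x \<le> F} = X" using Xel by (auto simp: less_imp_le)
    then have "F \<in> CC F X" unfolding CC_def using h GX ain[of 1] p0 by auto
    then show False using F_notin[OF SS] SX by simp
  qed
  have seq: "Sat_sequence F p D" unfolding Sat_sequence_def
    using p0 Dpos Dlt DSdvd ndF by auto
  have tD: "t (Suc k) * D (Suc k) = a (Suc k) - a k" if "1 \<le> k" "Suc k \<le> p" for k
  proof -
    have "D (Suc k) dvd a (Suc k)" "D (Suc k) dvd a k" using Ddvd_a that by auto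
    then have "D (Suc k) dvd a (Suc k) - a k" by (rule dvd_diff_nat)
    then show ?thesis unfolding t_def using that by simp
  qed
  have alt: "a k < a (Suc k)" if "1 \<le> k" "Suc k \<le> p" for k
    using inc that unfolding inc_def by auto
  have tpos: "\<forall>i\<in>{1..p}. t i > 0"
  proof
    fix i assume i: "i \<in> {1..p}"
    show "t i > 0"
    proof (cases "i = 1")
      case False
      then obtain k where k: "i = Suc k" "1 \<le> k" using i by (cases i) auto
      have "t i * D i > 0" using tD[of k] alt[of k] k i by auto
      then show ?thesis by simp
    qed (simp add: t_def)
  qed
  have sums: "(\<Sum>i=1..k. t i * D i) = a k" if "1 \<le> k" "k \<le> p" for k
    using that
  proof (induction k rule: dec_induct)
    case base then show ?case using D1 by (simp add: t_def)
  next
    case (step n)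
    have "(\<Sum>i=1..Suc n. t i * D i) = a n + t (Suc n) * D (Suc n)"
      using step by (simp add: sum.cl_ivl_Suc)
    also have "\<dots> = a (Suc n)" using tD[of n] alt[of n] step by simp
    finally show ?case .
  qed
  have sumF: "(\<Sum>i=1..p. t i * D i) < F" using sums[of p] p0 Xel ain[of p] by simp
  have gc: "\<forall>i\<in>{1..<p}. gcd (D i div D (Suc i)) (t (Suc i)) = 1"
  proof
    fix i assume i: "i \<in> {1..<p}"
    then have i1: "1 \<le> i" "Suc i \<le> p" by auto
    have "a (Suc i) = a i + t (Suc i) * D (Suc i)" using tD[OF i1] alt[OF i1] by simp
    then have "D (Suc i) = gcd (a i + t (Suc i) * D (Suc i)) (D i)" using DSuc by simp
    also have "\<dots> = D (Suc i) * gcd (D i div D (Suc i)) (t (Suc i))"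
      by (rule gcd_core) (use Dpos[of "Suc i"] DSdvd Ddvd_a[of i i] i1 in auto)
    finally show "gcd (D i div D (Suc i)) (t (Suc i)) = 1" using Dpos[of "Suc i"] by simp
  qed
  have Xgen: "X = gen_set p D t"
  proof -
    have "{1..p} = insert 1 {2..p}" using p0 by auto
    then have "X = insert (a 1) (a`{2..p})" using aX by auto
    also have "a`{2..p} = (\<lambda>k. \<Sum>j=1..k. t j * D j) ` {2..p}"
      by (rule image_cong) (use sums in auto)
    finally show ?thesis unfolding gen_set_def using D1 by simp
  qed
  show ?thesis using seq tpos sumF gc Xgen by blast
qed


theorem theorem49:
  fixes F p :: nat
  assumes "F > 0" and "p > 0"
  shows "(\<forall>d t. Sat_sequence F p d \<and> (\<forall>i\<in>{1..p}. t i > 0) \<and>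
            (\<Sum>i=1..p. t i * d i) < F \<and>
            (\<forall>i\<in>{1..<p}. gcd (d i div d (Suc i)) (t (Suc i)) = 1)
          \<longrightarrow> (\<exists>S\<in>Sat F. Sat_min_system F (gen_set p d t) S \<and> Sat_rank F S = p))
       \<and> (\<forall>S\<in>Sat F. \<forall>X. Sat_min_system F X S \<and> Sat_rank F S = p \<longrightarrow>
          (\<exists>d t. Sat_sequence F p d \<and> (\<forall>i\<in>{1..p}. t i > 0) \<and>
            (\<Sum>i=1..p. t i * d i) < F \<and>
            (\<forall>i\<in>{1..<p}. gcd (d i div d (Suc i)) (t (Suc i)) = 1) \<and>
            X = gen_set p d t))"
proof (intro conjI allI impI ballI)
  fix d t assume h: "Sat_sequence F p d \<and> (\<forall>i\<in>{1..p}. t i > 0) \<and>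
            (\<Sum>i=1..p. t i * d i) < F \<and>
            (\<forall>i\<in>{1..<p}. gcd (d i div d (Suc i)) (t (Suc i)) = 1)"
  show "\<exists>S\<in>Sat F. Sat_min_system F (gen_set p d t) S \<and> Sat_rank F S = p"
    using part1[OF assms] h by blast
next
  fix S X assume "S \<in> Sat F" "Sat_min_system F X S \<and> Sat_rank F S = p"
  then show "\<exists>d t. Sat_sequence F p d \<and> (\<forall>i\<in>{1..p}. t i > 0) \<and>
            (\<Sum>i=1..p. t i * d i) < F \<and>
            (\<forall>i\<in>{1..<p}. gcd (d i div d (Suc i)) (t (Suc i)) = 1) \<and>
            X = gen_set p d t"
    using part2[OF assms] by blast
qed

end
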